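(* Let $n\ge3$ and let $L$ and ${}^*L=e^{\sigma(x)}L+\beta$ be as in the context. Define $K_{ijk}=\frac{1}{L}\big[c_{ijk}-(h_{ij}M_k+h_{kj}M_i+h_{ki}M_j)\big]$ with $M_i=\frac{c_i}{n+1}$, and ${}^*K_{ijk}$ by the same formula built from ${}^*L$. Then ${}^*K_{ijk}=e^{\sigma(x)}K_{ijk}$.
   Context: $M$ is a smooth manifold of dimension $n$ with local coordinates $(x^i)$ and induced fiber coordinates $(y^i)$ on $TM$. $L(x,y)$ is a Finsler metric: positive and smooth for $y\neq0$, positively homogeneous of degree 1 in $y$, with positive definite fundamental tensor $g_{ij}=\frac12\frac{\partial^2L^2}{\partial y^i\partial y^j}$ and inverse $g^{ij}$. $\sigma(x)$ is a smooth function on $M$ and $\beta(x,y)=b_i(x)y^i$ is a 1-form; the conformal $\beta$-change is ${}^*L=e^{\sigma(x)}L+\beta$, assumed to be again a Finsler metric. Notation: $l_i=\partial L/\partial y^i$, $h_{ij}=g_{ij}-l_il_j$, $c_{ijk}=\frac12\partial g_{ij}/\partial y^k$, $c_i=g^{jk}c_{ijk}$. Quantities built from ${}^*L$ by the same formulas (using ${}^*g_{ij}$ and its inverse ${}^*g^{ij}$) are denoted with a left asterisk. *)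

theory Defs
  imports "HOL-Analysis.Analysis"
begin

text \<open>Everything is pointwise in x: we work on the fibre T_xM = R^n at a fixed point x,
  so L is a function of y only, sigma(x) is a real number and b_i(x) a vector.\<close>

definition pd :: "'n::finite \<Rightarrow> (real^'n \<Rightarrow> real) \<Rightarrow> real^'n \<Rightarrow> real" where
  "pd i f y = deriv (\<lambda>t. f (y + t *\<^sub>R axis i 1)) 0"

fun iter_pd :: "'n::finite list \<Rightarrow> (real^'n \<Rightarrow> real) \<Rightarrow> real^'n \<Rightarrow> real" where
  "iter_pd [] f = f"
| "iter_pd (i # is) f = pd i (iter_pd is f)"

definition smooth_off0 :: "(real^'n::finite \<Rightarrow> real) \<Rightarrow> bool" where
  "smooth_off0 f \<longleftrightarrow> (\<forall>is. iter_pd is f differentiable_on (UNIV - {0}))"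

definition fund_g :: "(real^'n::finite \<Rightarrow> real) \<Rightarrow> 'n \<Rightarrow> 'n \<Rightarrow> real^'n \<Rightarrow> real" where
  "fund_g L i j y = 1/2 * pd i (pd j (\<lambda>z. (L z)^2)) y"

definition fund_ginv :: "(real^'n::finite \<Rightarrow> real) \<Rightarrow> 'n \<Rightarrow> 'n \<Rightarrow> real^'n \<Rightarrow> real" where
  "fund_ginv L i j y = matrix_inv (\<chi> a b. fund_g L a b y) $ i $ j"

definition finsler :: "(real^'n::finite \<Rightarrow> real) \<Rightarrow> bool" where
  "finsler L \<longleftrightarrow> smooth_off0 L
     \<and> (\<forall>y. y \<noteq> 0 \<longrightarrow> L y > 0)
     \<and> (\<forall>y (t::real). y \<noteq> 0 \<longrightarrow> t > 0 \<longrightarrow> L (t *\<^sub>R y) = t * L y)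
     \<and> (\<forall>y v. y \<noteq> 0 \<longrightarrow> v \<noteq> 0 \<longrightarrow> (\<Sum>i\<in>UNIV. \<Sum>j\<in>UNIV. fund_g L i j y * v$i * v$j) > 0)"

definition l_vec :: "(real^'n::finite \<Rightarrow> real) \<Rightarrow> 'n \<Rightarrow> real^'n \<Rightarrow> real" where
  "l_vec L i y = pd i L y"

definition h_ang :: "(real^'n::finite \<Rightarrow> real) \<Rightarrow> 'n \<Rightarrow> 'n \<Rightarrow> real^'n \<Rightarrow> real" where
  "h_ang L i j y = fund_g L i j y - l_vec L i y * l_vec L j y"

definition cartan :: "(real^'n::finite \<Rightarrow> real) \<Rightarrow> 'n \<Rightarrow> 'n \<Rightarrow> 'n \<Rightarrow> real^'n \<Rightarrow> real" where
  "cartan L i j k y = 1/2 * pd k (fund_g L i j) y"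

definition cartan_tr :: "(real^'n::finite \<Rightarrow> real) \<Rightarrow> 'n \<Rightarrow> real^'n \<Rightarrow> real" where
  "cartan_tr L i y = (\<Sum>j\<in>UNIV. \<Sum>k\<in>UNIV. fund_ginv L j k y * cartan L i j k y)"

definition M_vec :: "(real^'n::finite \<Rightarrow> real) \<Rightarrow> 'n \<Rightarrow> real^'n \<Rightarrow> real" where
  "M_vec L i y = cartan_tr L i y / (real CARD('n) + 1)"

definition K_tensor :: "(real^'n::finite \<Rightarrow> real) \<Rightarrow> 'n \<Rightarrow> 'n \<Rightarrow> 'n \<Rightarrow> real^'n \<Rightarrow> real" where
  "K_tensor L i j k y = (1 / L y) * (cartan L i j k y
      - (h_ang L i j y * M_vec L k y + h_ang L k j y * M_vec L i y + h_ang L k i y * M_vec L j y))"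

end

theory Submission
  imports Defs
begin


abbreviation ax :: "'n::finite \<Rightarrow> real^'n" where "ax i \<equiv> axis i 1"

definition smooth0 :: "(real^'n::finite \<Rightarrow> real) \<Rightarrow> bool" where
  "smooth0 f \<longleftrightarrow> (\<forall>z. z \<noteq> 0 \<longrightarrow> f differentiable (at z))"

lemma smooth_off0_iter: "smooth_off0 f \<Longrightarrow> smooth0 (iter_pd is f)"
proof -
  assume "smooth_off0 f"
  then have "iter_pd is f differentiable_on (UNIV - {0})" unfolding smooth_off0_def by blast
  moreover have "open (UNIV - {0::real^'a})" by (simp add: open_Diff)
  ultimately show ?thesis unfolding smooth0_def
    using differentiable_on_eq_differentiable_at by blast
qed

lemma line_has:
  assumes "f differentiable (at y)"
  shows "((\<lambda>t. f (y + t *\<^sub>R ax i)) has_real_derivative pd i f y) (at 0)"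
proof -
  have "(\<lambda>t::real. y + t *\<^sub>R ax i) differentiable (at 0)"
    by (intro derivative_intros)
  moreover have "f differentiable (at ((\<lambda>t::real. y + t *\<^sub>R ax i) 0))" using assms by simp
  ultimately have "(f \<circ> (\<lambda>t::real. y + t *\<^sub>R ax i)) differentiable (at 0)"
    by (rule differentiable_chain_at)
  then have "(\<lambda>t. f (y + t *\<^sub>R ax i)) differentiable (at 0)"
    by (simp add: o_def)
  then show ?thesis unfolding pd_def
    using DERIV_deriv_iff_real_differentiable by blast
qed

lemma pd_eqI:
  assumes "(g has_real_derivative D) (at 0)"
    and "eventually (\<lambda>t. f (y + t *\<^sub>R ax i) = g t) (nhds 0)"
  shows "pd i f y = D"
proof -
  have "deriv (\<lambda>t. f (y + t *\<^sub>R ax i)) 0 = deriv g 0"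
    by (rule deriv_cong_ev[OF assms(2) refl])
  also have "\<dots> = D" using assms(1) by (rule DERIV_imp_deriv)
  finally show ?thesis unfolding pd_def .
qed

lemma ev_nonzero:
  assumes "(y::real^'n::finite) \<noteq> 0"
  shows "eventually (\<lambda>t. y + t *\<^sub>R v \<noteq> 0) (nhds (0::real))"
proof -
  have "((\<lambda>t::real. y + t *\<^sub>R v) \<longlongrightarrow> y + 0 *\<^sub>R v) (nhds 0)"
    by (intro tendsto_intros filterlim_ident)
  then have "((\<lambda>t::real. y + t *\<^sub>R v) \<longlongrightarrow> y) (nhds 0)" by simp
  then show ?thesis using assms tendsto_imp_eventually_ne by blast
qed

lemma pd_local:
  assumes "y \<noteq> 0" "\<And>z. z \<noteq> 0 \<Longrightarrow> f z = g z"
  shows "pd i f y = pd i g y"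
proof -
  have "eventually (\<lambda>t. f (y + t *\<^sub>R ax i) = g (y + t *\<^sub>R ax i)) (nhds 0)"
    using ev_nonzero[OF assms(1), of "ax i"] by eventually_elim (use assms(2) in auto)
  then show ?thesis unfolding pd_def by (rule deriv_cong_ev) simp
qed

lemma pd_eqI0:
  assumes "y \<noteq> 0" "(g has_real_derivative D) (at 0)"
    and "\<And>t. y + t *\<^sub>R ax i \<noteq> 0 \<Longrightarrow> f (y + t *\<^sub>R ax i) = g t"
  shows "pd i f y = D"
  using assms(2) apply (rule pd_eqI)
  using ev_nonzero[OF assms(1), of "ax i"] by eventually_elim (use assms(3) in auto)



lemma smooth0_L: "smooth_off0 f \<Longrightarrow> smooth0 f"
  using smooth_off0_iter[of f "[]"] by simp
lemma smooth0_pd: "smooth_off0 f \<Longrightarrow> smooth0 (pd i f)"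
  using smooth_off0_iter[of f "[i]"] by simp
lemma smooth0_pd2: "smooth_off0 f \<Longrightarrow> smooth0 (pd i (pd j f))"
  using smooth_off0_iter[of f "[i,j]"] by simp
lemma smooth0_pd3: "smooth_off0 f \<Longrightarrow> smooth0 (pd i (pd j (pd k f)))"
  using smooth_off0_iter[of f "[i,j,k]"] by simp

lemma lh: "smooth0 f \<Longrightarrow> z \<noteq> 0 \<Longrightarrow>
   ((\<lambda>t. f (z + t *\<^sub>R ax i)) has_real_derivative pd i f z) (at 0)"
  unfolding smooth0_def using line_has by blast

lemma pd_sq:
  assumes "smooth0 F" "z \<noteq> 0"
  shows "pd j (\<lambda>w. F w ^ 2) z = 2 * F z * pd j F z"
proof (rule pd_eqI0[OF assms(2)])
  show "((\<lambda>t. F (z + t *\<^sub>R ax j) * F (z + t *\<^sub>R ax j)) has_real_derivative 2 * F z * pd j F z) (at 0)"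
    using DERIV_mult[OF lh[OF assms, of j] lh[OF assms, of j]] by (simp add: algebra_simps)
qed (simp add: power2_eq_square)

lemma fund_g_formula:
  assumes "smooth_off0 F" "z \<noteq> 0"
  shows "fund_g F i j z = pd i F z * pd j F z + F z * pd i (pd j F) z"
proof -
  have "pd i (pd j (\<lambda>w. F w ^ 2)) z = pd i (\<lambda>w. 2 * F w * pd j F w) z"
    by (rule pd_local[OF assms(2)]) (use pd_sq[OF smooth0_L[OF assms(1)]] in auto)
  also have "\<dots> = 2 * (pd i F z * pd j F z + F z * pd i (pd j F) z)"
  proof (rule pd_eqI0[OF assms(2)])
    show "((\<lambda>t. 2 * F (z + t *\<^sub>R ax i) * pd j F (z + t *\<^sub>R ax i)) has_real_derivative
        2 * (pd i F z * pd j F z + F z * pd i (pd j F) z)) (at 0)"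
      using DERIV_mult[OF DERIV_cmult[OF lh[OF smooth0_L[OF assms(1)] assms(2), of i], of 2]
          lh[OF smooth0_pd[OF assms(1), of j] assms(2), of i]] by (simp add: algebra_simps)
  qed simp
  finally show ?thesis unfolding fund_g_def by simp
qed

lemma cartan_formula:
  assumes "smooth_off0 F" "y \<noteq> 0"
  shows "cartan F i j k y = 1/2 * (pd k (pd i F) y * pd j F y + pd i F y * pd k (pd j F) y
      + pd k F y * pd i (pd j F) y + F y * pd k (pd i (pd j F)) y)"
proof -
  have "pd k (fund_g F i j) y = pd k (\<lambda>w. pd i F w * pd j F w + F w * pd i (pd j F) w) y"
    by (rule pd_local[OF assms(2)]) (use fund_g_formula[OF assms(1)] in auto)
  also have "\<dots> = pd k (pd i F) y * pd j F y + pd i F y * pd k (pd j F) y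
      + (pd k F y * pd i (pd j F) y + F y * pd k (pd i (pd j F)) y)"
  proof (rule pd_eqI0[OF assms(2)])
    show "((\<lambda>t. pd i F (y + t *\<^sub>R ax k) * pd j F (y + t *\<^sub>R ax k) + F (y + t *\<^sub>R ax k) * pd i (pd j F) (y + t *\<^sub>R ax k)) has_real_derivative
        pd k (pd i F) y * pd j F y + pd i F y * pd k (pd j F) y
      + (pd k F y * pd i (pd j F) y + F y * pd k (pd i (pd j F)) y)) (at 0)"
      using DERIV_add[OF DERIV_mult[OF lh[OF smooth0_pd[OF assms(1), of i] assms(2), of k] lh[OF smooth0_pd[OF assms(1), of j] assms(2), of k]]
         DERIV_mult[OF lh[OF smooth0_L[OF assms(1)] assms(2), of k] lh[OF smooth0_pd2[OF assms(1), of i j] assms(2), of k]]]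
      by (simp add: algebra_simps)
  qed simp
  finally show ?thesis unfolding cartan_def by (simp add: algebra_simps)
qed

lemma pd_affine:
  assumes "smooth0 f" "z \<noteq> 0"
  shows "pd k (\<lambda>w. c * f w + d) z = c * pd k f z"
proof -
  have "((\<lambda>t. c * f (z + t *\<^sub>R ax k) + d) has_real_derivative c * pd k f z) (at 0)"
    using DERIV_add[OF DERIV_cmult[OF lh[OF assms, of k], of c] DERIV_const[of d]] by simp
  then show ?thesis by (rule pd_eqI0[OF assms(2)]) simp
qed

lemma pd_randers:
  assumes "smooth0 f" "z \<noteq> 0"
  shows "pd k (\<lambda>w. c * f w + b \<bullet> w) z = c * pd k f z + b $ k"
proof (rule pd_eqI0[OF assms(2)])
  show "((\<lambda>t. c * f (z + t *\<^sub>R ax k) + (b \<bullet> z + t * b $ k)) has_real_derivative c * pd k f z + b $ k) (at 0)"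
    by (rule DERIV_add[OF DERIV_cmult[OF lh[OF assms]]]) (auto intro!: derivative_eq_intros)
qed (simp add: inner_add_right inner_axis)



definition hom :: "real \<Rightarrow> (real^'n::finite \<Rightarrow> real) \<Rightarrow> bool" where
  "hom r f \<longleftrightarrow> (\<forall>y t. y \<noteq> 0 \<longrightarrow> t > 0 \<longrightarrow> f (t *\<^sub>R y) = t powr r * f y)"

lemma hom_pd:
  assumes "hom r f" "smooth0 f"
  shows "hom (r - 1) (pd i f)"
  unfolding hom_def
proof (intro allI impI)
  fix y :: "real^'a" and t :: real
  assume y: "y \<noteq> 0" and t: "t > 0"
  have ty: "t *\<^sub>R y \<noteq> 0" using y t by simp
  have d1: "((\<lambda>u. f (y + u *\<^sub>R ax i)) has_real_derivative pd i f y) (at (0 / t))"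
    using lh[OF assms(2) y] by simp
  have d2: "((\<lambda>s. s / t) has_real_derivative 1 / t) (at 0)"
    using t by (auto intro!: derivative_eq_intros)
  have "((\<lambda>s. t powr r * f (y + (s / t) *\<^sub>R ax i)) has_real_derivative t powr r * (pd i f y * (1 / t))) (at 0)"
    by (rule DERIV_cmult, rule DERIV_chain2[OF d1 d2])
  moreover have "t powr r * (pd i f y * (1 / t)) = t powr (r - 1) * pd i f y"
    using t by (simp add: powr_diff)
  ultimately have d: "((\<lambda>s. t powr r * f (y + (s / t) *\<^sub>R ax i)) has_real_derivative t powr (r - 1) * pd i f y) (at 0)"
    by simp
  show "pd i f (t *\<^sub>R y) = t powr (r - 1) * pd i f y"
  proof (rule pd_eqI0[OF ty d])
    fix s assume ne: "t *\<^sub>R y + s *\<^sub>R ax i \<noteq> 0"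
    have eq: "t *\<^sub>R y + s *\<^sub>R ax i = t *\<^sub>R (y + (s / t) *\<^sub>R ax i)"
      using t by (simp add: scaleR_add_right)
    have "y + (s / t) *\<^sub>R ax i \<noteq> 0" using ne eq by auto
    then show "f (t *\<^sub>R y + s *\<^sub>R ax i) = t powr r * f (y + (s / t) *\<^sub>R ax i)"
      using assms(1) t unfolding hom_def eq by blast
  qed
qed

lemma line_D:
  assumes "(f has_derivative D) (at y)"
  shows "((\<lambda>t. f (y + t *\<^sub>R v)) has_real_derivative D v) (at 0)"
proof -
  have a: "((\<lambda>t::real. y + t *\<^sub>R v) has_derivative (\<lambda>h. h *\<^sub>R v)) (at 0)"
    by (auto intro!: derivative_eq_intros)
  have b: "(f has_derivative D) (at ((\<lambda>t::real. y + t *\<^sub>R v) 0))" using assms by simp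
  have "((\<lambda>t. f (y + t *\<^sub>R v)) has_derivative (\<lambda>h. D (h *\<^sub>R v))) (at 0)"
    using has_derivative_compose[OF a b] by simp
  moreover have "(\<lambda>h. D (h *\<^sub>R v)) = (*) (D v)"
    using has_derivative_linear[OF assms] by (auto simp: linear_cmul)
  ultimately show ?thesis unfolding has_field_derivative_def by simp
qed

lemma euler:
  assumes "hom r f" "smooth0 f" "y \<noteq> 0"
  shows "(\<Sum>k\<in>UNIV. y $ k * pd k f y) = r * f y"
proof -
  obtain D where D: "(f has_derivative D) (at y)"
    using assms(2,3) unfolding smooth0_def differentiable_def by blast
  have pdk: "pd k f y = D (ax k)" for k
    unfolding pd_def by (rule DERIV_imp_deriv[OF line_D[OF D]])
  have lin: "linear D" using has_derivative_linear[OF D] .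
  have "D y = D (\<Sum>k\<in>UNIV. y $ k *\<^sub>R ax k)"
    using basis_expansion[of y] by (simp add: scalar_mult_eq_scaleR)
  also have "\<dots> = (\<Sum>k\<in>UNIV. y $ k * D (ax k))"
    using lin by (simp add: linear_sum linear_cmul)
  finally have Dy: "D y = (\<Sum>k\<in>UNIV. y $ k * pd k f y)" by (simp add: pdk)
  have d1: "((\<lambda>s. f (y + s *\<^sub>R y)) has_real_derivative D y) (at 0)" by (rule line_D[OF D])
  have d2: "((\<lambda>s. (1 + s) powr r * f y) has_real_derivative r * f y) (at 0)"
    using DERIV_cmult[OF DERIV_fun_powr[of "\<lambda>s. 1 + s" 1 0 r], of "f y"]
    by (auto intro!: derivative_eq_intros simp: algebra_simps)
  have ev: "eventually (\<lambda>s. f (y + s *\<^sub>R y) = (1 + s) powr r * f y) (nhds (0::real))"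
  proof -
    have "eventually (\<lambda>s::real. s \<in> {-1<..}) (nhds 0)"
      by (rule eventually_nhds_in_open) auto
    then have "eventually (\<lambda>s::real. 1 + s > 0) (nhds 0)"
      by eventually_elim auto
    then show ?thesis
    proof eventually_elim
      case (elim s)
      have "y + s *\<^sub>R y = (1 + s) *\<^sub>R y" by (simp add: algebra_simps)
      then show ?case using assms(1,3) elim unfolding hom_def by simp
    qed
  qed
  have "((\<lambda>s. f (y + s *\<^sub>R y)) has_real_derivative r * f y) (at 0)"
  proof -
    have ev': "eventually (\<lambda>s. (1 + s) powr r * f y = f (y + s *\<^sub>R y)) (nhds (0::real))"
      using ev by eventually_elim simp
    show ?thesis using d2 DERIV_cong_ev[OF refl ev' refl] by blast
  qed
  then have "D y = r * f y" using d1 DERIV_unique by blast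
  then show ?thesis using Dy by simp
qed



lemma lh_at:
  assumes "smooth0 f" "w + s0 *\<^sub>R ax i \<noteq> 0"
  shows "((\<lambda>s. f (w + s *\<^sub>R ax i)) has_real_derivative pd i f (w + s0 *\<^sub>R ax i)) (at s0)"
proof -
  have d1: "((\<lambda>t. f ((w + s0 *\<^sub>R ax i) + t *\<^sub>R ax i)) has_real_derivative pd i f (w + s0 *\<^sub>R ax i)) (at (s0 - s0))"
    using lh[OF assms] by simp
  have d2: "((\<lambda>s. s - s0) has_real_derivative 1) (at s0)"
    by (auto intro!: derivative_eq_intros)
  have "((\<lambda>s. f ((w + s0 *\<^sub>R ax i) + (s - s0) *\<^sub>R ax i)) has_real_derivative pd i f (w + s0 *\<^sub>R ax i) * 1) (at s0)"
    by (rule DERIV_chain2[OF d1 d2])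
  moreover have "(w + s0 *\<^sub>R ax i) + (s - s0) *\<^sub>R ax i = w + s *\<^sub>R ax i" for s
    by (simp add: algebra_simps)
  ultimately show ?thesis by simp
qed

lemma small_ne:
  assumes "2 * h < norm y" "0 \<le> s" "s \<le> h" "0 \<le> u" "u \<le> h"
  shows "y + s *\<^sub>R ax a + u *\<^sub>R ax (b::'n::finite) \<noteq> (0::real^'n)"
proof
  assume "y + s *\<^sub>R ax a + u *\<^sub>R ax b = 0"
  then have "y = - (s *\<^sub>R ax a + u *\<^sub>R ax b)" by (simp add: algebra_simps eq_neg_iff_add_eq_0)
  then have "norm y = norm (s *\<^sub>R ax a + u *\<^sub>R ax b)" by (simp only: norm_minus_cancel)
  also have "\<dots> \<le> norm (s *\<^sub>R ax a) + norm (u *\<^sub>R ax b)"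
    by (rule norm_triangle_ineq)
  also have "\<dots> = s + u" using assms by simp
  finally show False using assms by simp
qed

lemma mvt2d:
  assumes "smooth0 f" "smooth0 (pd a f)" "0 < h" "2 * h < norm y"
  shows "\<exists>\<xi> \<eta>. 0 < \<xi> \<and> \<xi> < h \<and> 0 < \<eta> \<and> \<eta> < h \<and>
    f (y + h *\<^sub>R ax a + h *\<^sub>R ax b) - f (y + h *\<^sub>R ax a) - f (y + h *\<^sub>R ax b) + f y
      = h^2 * pd b (pd a f) (y + \<xi> *\<^sub>R ax a + \<eta> *\<^sub>R ax b)"
proof -
  have ne: "y + s *\<^sub>R ax a + u *\<^sub>R ax b \<noteq> 0" if "0 \<le> s" "s \<le> h" "0 \<le> u" "u \<le> h" for s u
    using small_ne[OF assms(4) that] .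
  define \<phi> where "\<phi> s = f ((y + h *\<^sub>R ax b) + s *\<^sub>R ax a) - f (y + s *\<^sub>R ax a)" for s
  have "DERIV \<phi> s :> pd a f ((y + h *\<^sub>R ax b) + s *\<^sub>R ax a) - pd a f (y + s *\<^sub>R ax a)"
    if "0 \<le> s" "s \<le> h" for s
    unfolding \<phi>_def
  proof (rule DERIV_diff)
    show "((\<lambda>s. f (y + h *\<^sub>R ax b + s *\<^sub>R ax a)) has_real_derivative pd a f (y + h *\<^sub>R ax b + s *\<^sub>R ax a)) (at s)"
      by (rule lh_at[OF assms(1)]) (use ne[OF that, of h] assms(3) in \<open>simp add: algebra_simps\<close>)
    show "((\<lambda>s. f (y + s *\<^sub>R ax a)) has_real_derivative pd a f (y + s *\<^sub>R ax a)) (at s)"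
      by (rule lh_at[OF assms(1)]) (use ne[OF that, of 0] assms(3) in simp)
  qed
  from MVT2[OF assms(3), of \<phi>, OF this]
  obtain \<xi> where xi: "0 < \<xi>" "\<xi> < h"
    and e1: "\<phi> h - \<phi> 0 = (h - 0) * (pd a f ((y + h *\<^sub>R ax b) + \<xi> *\<^sub>R ax a) - pd a f (y + \<xi> *\<^sub>R ax a))"
    by blast
  define \<psi> where "\<psi> u = pd a f ((y + \<xi> *\<^sub>R ax a) + u *\<^sub>R ax b)" for u
  have "DERIV \<psi> u :> pd b (pd a f) ((y + \<xi> *\<^sub>R ax a) + u *\<^sub>R ax b)" if "0 \<le> u" "u \<le> h" for u
    unfolding \<psi>_def
    by (rule lh_at[OF assms(2)]) (use ne[of \<xi> u] xi that in simp)
  from MVT2[OF assms(3), of \<psi>, OF this]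
  obtain \<eta> where eta: "0 < \<eta>" "\<eta> < h"
    and e2: "\<psi> h - \<psi> 0 = (h - 0) * pd b (pd a f) ((y + \<xi> *\<^sub>R ax a) + \<eta> *\<^sub>R ax b)"
    by blast
  have "\<psi> h = pd a f ((y + h *\<^sub>R ax b) + \<xi> *\<^sub>R ax a)" unfolding \<psi>_def by (simp add: algebra_simps)
  moreover have "\<psi> 0 = pd a f (y + \<xi> *\<^sub>R ax a)" unfolding \<psi>_def by simp
  moreover have "\<phi> h - \<phi> 0 = f (y + h *\<^sub>R ax a + h *\<^sub>R ax b) - f (y + h *\<^sub>R ax a) - f (y + h *\<^sub>R ax b) + f y"
    unfolding \<phi>_def by (simp add: algebra_simps)
  ultimately have "f (y + h *\<^sub>R ax a + h *\<^sub>R ax b) - f (y + h *\<^sub>R ax a) - f (y + h *\<^sub>R ax b) + f y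
      = h^2 * pd b (pd a f) (y + \<xi> *\<^sub>R ax a + \<eta> *\<^sub>R ax b)"
    using e1 e2 by (simp add: power2_eq_square)
  then show ?thesis using xi eta by blast
qed

lemma abs_aux: "\<bar>p - A\<bar> < \<bar>A - B\<bar> / 2 \<Longrightarrow> \<bar>q - B\<bar> < \<bar>A - B\<bar> / 2 \<Longrightarrow> p = q \<Longrightarrow> False"
  for p q A B :: real
  by (simp add: abs_if split: if_splits)

lemma schwarz:
  assumes "smooth0 f" "smooth0 (pd a f)" "smooth0 (pd b f)"
    "smooth0 (pd b (pd a f))" "smooth0 (pd a (pd b f))" "y \<noteq> 0"
  shows "pd b (pd a f) y = pd a (pd b f) y"
proof (rule ccontr)
  let ?F = "pd b (pd a f)" and ?G = "pd a (pd b f)"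
  assume neq: "?F y \<noteq> ?G y"
  define \<epsilon> where "\<epsilon> = \<bar>?F y - ?G y\<bar> / 2"
  have ep: "\<epsilon> > 0" using neq unfolding \<epsilon>_def by simp
  have cF: "continuous (at y) ?F"
    using assms(4,6) unfolding smooth0_def by (simp add: differentiable_imp_continuous_within)
  have cG: "continuous (at y) ?G"
    using assms(5,6) unfolding smooth0_def by (simp add: differentiable_imp_continuous_within)
  obtain d1 where d1: "d1 > 0" "\<And>x'. dist x' y < d1 \<Longrightarrow> dist (?F x') (?F y) < \<epsilon>"
    using cF ep unfolding continuous_at_eps_delta by blast
  obtain d2 where d2: "d2 > 0" "\<And>x'. dist x' y < d2 \<Longrightarrow> dist (?G x') (?G y) < \<epsilon>"
    using cG ep unfolding continuous_at_eps_delta by blast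
  define h where "h = min (min d1 d2) (norm y) / 4"
  have h: "0 < h" "2 * h < norm y" "2 * h < d1" "2 * h < d2"
  proof -
    let ?m = "min (min d1 d2) (norm y)"
    have "?m \<le> norm y" "?m \<le> d1" "?m \<le> d2" "0 < ?m" using d1(1) d2(1) assms(6) by auto
    then show "0 < h" "2 * h < norm y" "2 * h < d1" "2 * h < d2" unfolding h_def by linarith+
  qed
  obtain \<xi> \<eta> where xe: "0 < \<xi>" "\<xi> < h" "0 < \<eta>" "\<eta> < h"
    and E1: "f (y + h *\<^sub>R ax a + h *\<^sub>R ax b) - f (y + h *\<^sub>R ax a) - f (y + h *\<^sub>R ax b) + f y
      = h^2 * ?F (y + \<xi> *\<^sub>R ax a + \<eta> *\<^sub>R ax b)"
    using mvt2d[OF assms(1,2) h(1,2)] by blast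
  obtain \<xi>' \<eta>' where xe': "0 < \<xi>'" "\<xi>' < h" "0 < \<eta>'" "\<eta>' < h"
    and E2: "f (y + h *\<^sub>R ax b + h *\<^sub>R ax a) - f (y + h *\<^sub>R ax b) - f (y + h *\<^sub>R ax a) + f y
      = h^2 * ?G (y + \<xi>' *\<^sub>R ax b + \<eta>' *\<^sub>R ax a)"
    using mvt2d[OF assms(1,3) h(1,2)] by blast
  have eqv: "y + h *\<^sub>R ax b + h *\<^sub>R ax a = y + h *\<^sub>R ax a + h *\<^sub>R ax b" by (simp add: algebra_simps)
  have "h^2 * ?F (y + \<xi> *\<^sub>R ax a + \<eta> *\<^sub>R ax b) = h^2 * ?G (y + \<xi>' *\<^sub>R ax b + \<eta>' *\<^sub>R ax a)"
    using E1 E2[unfolded eqv] by linarith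
  then have FG: "?F (y + \<xi> *\<^sub>R ax a + \<eta> *\<^sub>R ax b) = ?G (y + \<xi>' *\<^sub>R ax b + \<eta>' *\<^sub>R ax a)"
    using h(1) by simp
  have dist1: "dist (y + s *\<^sub>R ax c + u *\<^sub>R ax e) y < 2 * h" if "0 < s" "s < h" "0 < u" "u < h" for s u c e
  proof -
    have "dist (y + s *\<^sub>R ax c + u *\<^sub>R ax e) y = norm (s *\<^sub>R ax c + u *\<^sub>R ax e)"
      by (simp add: dist_norm)
    also have "\<dots> \<le> norm (s *\<^sub>R ax c) + norm (u *\<^sub>R ax e)" by (rule norm_triangle_ineq)
    also have "\<dots> = s + u" using that by simp
    finally show ?thesis using that by simp
  qed
  have "dist (?F (y + \<xi> *\<^sub>R ax a + \<eta> *\<^sub>R ax b)) (?F y) < \<epsilon>"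
    using d1(2)[of "y + \<xi> *\<^sub>R ax a + \<eta> *\<^sub>R ax b"] dist1[OF xe, of a b] h by linarith
  moreover have "dist (?G (y + \<xi>' *\<^sub>R ax b + \<eta>' *\<^sub>R ax a)) (?G y) < \<epsilon>"
    using d2(2)[of "y + \<xi>' *\<^sub>R ax b + \<eta>' *\<^sub>R ax a"] dist1[OF xe', of b a] h by linarith
  ultimately show False using FG abs_aux unfolding \<epsilon>_def dist_real_def by blast
qed



lemma sum_axis: "(\<Sum>j\<in>UNIV. ax k $ j * f j) = (f k :: real)"
proof -
  have "ax k $ j * f j = (if k = j then f j else 0)" for j by (simp add: axis_def)
  then show ?thesis by simp
qed

context
  fixes L :: "real^'n::finite \<Rightarrow> real"
  assumes fL: "finsler L"
begin

lemma sL: "smooth_off0 L" using fL unfolding finsler_def by blast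

lemma Lpos: "y \<noteq> 0 \<Longrightarrow> L y > 0" using fL unfolding finsler_def by blast

lemma hom1: "hom 1 L"
  using fL unfolding finsler_def hom_def by auto

lemma hom0: "hom 0 (pd i L)"
  using hom_pd[OF hom1 smooth0_L[OF sL], of i] by simp

lemma homm1: "hom (-1) (pd i (pd j L))"
  using hom_pd[OF hom0[of j] smooth0_pd[OF sL, of j], of i] by simp

lemma F1: "y \<noteq> 0 \<Longrightarrow> (\<Sum>k\<in>UNIV. y $ k * pd k L y) = L y"
  using euler[OF hom1 smooth0_L[OF sL]] by simp

lemma F2: "y \<noteq> 0 \<Longrightarrow> (\<Sum>k\<in>UNIV. y $ k * pd k (pd i L) y) = 0"
  using euler[OF hom0 smooth0_pd[OF sL]] by simp

lemma F3: "y \<noteq> 0 \<Longrightarrow> (\<Sum>k\<in>UNIV. y $ k * pd k (pd i (pd j L)) y) = - pd i (pd j L) y"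
  using euler[OF homm1 smooth0_pd2[OF sL]] by simp

lemma F4: "y \<noteq> 0 \<Longrightarrow> pd a (pd b L) y = pd b (pd a L) y"
  by (rule schwarz[OF smooth0_L[OF sL] smooth0_pd[OF sL] smooth0_pd[OF sL] smooth0_pd2[OF sL] smooth0_pd2[OF sL]])

lemma F2': "y \<noteq> 0 \<Longrightarrow> (\<Sum>k\<in>UNIV. y $ k * pd i (pd k L) y) = 0"
  using F2[of y i] F4[of y i] by simp

lemma F5: 
  assumes y: "y \<noteq> 0"
  shows "(\<Sum>j\<in>UNIV. y $ j * pd k (pd i (pd j L)) y) = - pd i (pd k L) y"
proof -
  let ?E = "\<lambda>z. \<Sum>j\<in>UNIV. z $ j * pd i (pd j L) z"
  have "pd k ?E y = pd k (\<lambda>z. 0 * L z + 0) y"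
    by (rule pd_local[OF y]) (use F2' in simp)
  also have "\<dots> = 0" using pd_affine[OF smooth0_L[OF sL] y, of k 0 0] by simp
  finally have z: "pd k ?E y = 0" .
  have "((\<lambda>t. \<Sum>j\<in>UNIV. (y + t *\<^sub>R ax k) $ j * pd i (pd j L) (y + t *\<^sub>R ax k)) has_real_derivative
     (\<Sum>j\<in>UNIV. ax k $ j * pd i (pd j L) y + y $ j * pd k (pd i (pd j L)) y)) (at 0)"
  proof (rule DERIV_sum)
    fix j
    have d1: "((\<lambda>t. (y + t *\<^sub>R ax k) $ j) has_real_derivative ax k $ j) (at 0)"
      by (auto intro!: derivative_eq_intros)
    show "((\<lambda>t. (y + t *\<^sub>R ax k) $ j * pd i (pd j L) (y + t *\<^sub>R ax k)) has_real_derivative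
        ax k $ j * pd i (pd j L) y + y $ j * pd k (pd i (pd j L)) y) (at 0)"
      using DERIV_mult[OF d1 lh[OF smooth0_pd2[OF sL, of i j] y, of k]] by (simp add: algebra_simps)
  qed
  then have "pd k ?E y = (\<Sum>j\<in>UNIV. ax k $ j * pd i (pd j L) y + y $ j * pd k (pd i (pd j L)) y)"
    by (rule pd_eqI0[OF y]) simp
  also have "\<dots> = pd i (pd k L) y + (\<Sum>j\<in>UNIV. y $ j * pd k (pd i (pd j L)) y)"
    by (simp add: sum.distrib sum_axis)
  finally show ?thesis using z by simp
qed

end



lemma inv_unique:
  fixes A B :: "real^'n::finite^'n"
  assumes AB: "A ** B = mat 1"
  shows "matrix_inv A = B"
proof -
  have BA: "B ** A = mat 1" using AB matrix_left_right_inverse by blast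
  have ex: "\<exists>A'. A ** A' = mat 1 \<and> A' ** A = mat 1" using AB BA by blast
  define M where "M = matrix_inv A"
  have M: "A ** M = mat 1 \<and> M ** A = mat 1"
    unfolding M_def matrix_inv_def by (rule someI_ex[OF ex])
  have "M = M ** (A ** B)" by (simp add: AB)
  also have "\<dots> = (M ** A) ** B" by (simp add: matrix_mul_assoc)
  also have "\<dots> = B" using M by simp
  finally show ?thesis unfolding M_def .
qed

lemma mat_entry: "((A::real^'n::finite^'n) ** B) $ i $ j = (\<Sum>k\<in>UNIV. A $ i $ k * B $ k $ j)"
  by (simp add: matrix_matrix_mult_def)

lemma mat1_entry: "(mat 1 :: real^'n::finite^'n) $ i $ j = (if i = j then 1 else 0)"
  by (simp add: mat_def)

lemma posdef_inv:
  fixes g :: "'n::finite \<Rightarrow> 'n \<Rightarrow> real"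
  assumes pos: "\<And>v. v \<noteq> 0 \<Longrightarrow> (\<Sum>i\<in>UNIV. \<Sum>j\<in>UNIV. g i j * v$i * v$j) > 0"
  shows "(\<chi> a b. g a b) ** matrix_inv (\<chi> a b. g a b) = mat 1
       \<and> matrix_inv (\<chi> a b. g a b) ** (\<chi> a b. g a b) = mat 1"
proof -
  let ?A = "(\<chi> a b. g a b) :: real^'n^'n"
  have "\<forall>x. ?A *v x = 0 \<longrightarrow> x = 0"
  proof (intro allI impI)
    fix x assume x: "?A *v x = 0"
    have "(\<Sum>i\<in>UNIV. \<Sum>j\<in>UNIV. g i j * x$i * x$j) = (\<Sum>i\<in>UNIV. x$i * (?A *v x) $ i)"
      by (simp add: matrix_vector_mult_def sum_distrib_left algebra_simps)
    also have "\<dots> = 0" using x by simp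
    finally show "x = 0" using pos[of x] by fastforce
  qed
  then obtain B where "B ** ?A = mat 1" using matrix_left_invertible_ker by blast
  then have AB: "?A ** B = mat 1" using matrix_left_right_inverse by blast
  then have "matrix_inv ?A = B" by (rule inv_unique)
  then show ?thesis using AB matrix_left_right_inverse by auto
qed



lemma swap_mul: "(\<Sum>k\<in>UNIV. a k * (\<Sum>j\<in>UNIV. b k j * x j)) = (\<Sum>j\<in>UNIV. (\<Sum>k\<in>UNIV. a k * b k j) * (x j::real))"
proof -
  have "(\<Sum>k\<in>UNIV. a k * (\<Sum>j\<in>UNIV. b k j * x j)) = (\<Sum>k\<in>UNIV. \<Sum>j\<in>UNIV. a k * b k j * x j)"
    by (simp add: sum_distrib_left mult.assoc)
  also have "\<dots> = (\<Sum>j\<in>UNIV. \<Sum>k\<in>UNIV. a k * b k j * x j)" by (rule sum.swap)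
  also have "\<dots> = (\<Sum>j\<in>UNIV. (\<Sum>k\<in>UNIV. a k * b k j) * x j)"
    by (simp add: sum_distrib_right)
  finally show ?thesis .
qed

lemma delta_sum: "(\<Sum>j\<in>UNIV. (if (a::'n::finite) = j then 1 else 0) * (x j::real)) = x a"
proof -
  have "(if a = j then 1 else 0) * (x j::real) = (if a = j then x j else 0)" for j by simp
  then show ?thesis by (simp add: sum.delta sum.delta')
qed

lemma delta_sum': "(\<Sum>j\<in>UNIV. (if j = (a::'n::finite) then 1 else 0) * (x j::real)) = x a"
proof -
  have "(if j = a then 1 else 0) * (x j::real) = (if a = j then x j else 0)" for j by simp
  then show ?thesis by (simp add: sum.delta sum.delta')
qed

context
  fixes L :: "real^'n::finite \<Rightarrow> real"
  assumes fL: "finsler L"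
begin

lemma g_eq: "y \<noteq> 0 \<Longrightarrow> fund_g L a c y = pd a L y * pd c L y + L y * pd a (pd c L) y"
  by (rule fund_g_formula[OF sL[OF fL]])

lemma g_sym: "y \<noteq> 0 \<Longrightarrow> fund_g L a c y = fund_g L c a y"
  using g_eq F4[OF fL] by simp

lemma G12:
  assumes "y \<noteq> 0"
  shows "(\<chi> a b. fund_g L a b y) ** matrix_inv (\<chi> a b. fund_g L a b y) = mat 1
       \<and> matrix_inv (\<chi> a b. fund_g L a b y) ** (\<chi> a b. fund_g L a b y) = mat 1"
  by (rule posdef_inv) (use fL assms in \<open>auto simp: finsler_def\<close>)

lemma G1: "y \<noteq> 0 \<Longrightarrow> (\<Sum>k\<in>UNIV. fund_g L a k y * fund_ginv L k c y) = (if a = c then 1 else 0)"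
  using arg_cong[OF conjunct1[OF G12], of y "\<lambda>M. M $ a $ c"] by (simp add: mat_entry mat1_entry fund_ginv_def)

lemma G2: "y \<noteq> 0 \<Longrightarrow> (\<Sum>k\<in>UNIV. fund_ginv L a k y * fund_g L k c y) = (if a = c then 1 else 0)"
  using arg_cong[OF conjunct2[OF G12], of y "\<lambda>M. M $ a $ c"] by (simp add: mat_entry mat1_entry fund_ginv_def)

lemma G_sym:
  assumes y: "y \<noteq> 0"
  shows "fund_ginv L a c y = fund_ginv L c a y"
proof -
  let ?A = "(\<chi> a b. fund_g L a b y) :: real^'n^'n"
  have tA: "transpose ?A = ?A"
    using g_sym[OF y] by (simp add: transpose_def vec_eq_iff)
  have "?A ** transpose (matrix_inv ?A) = mat 1"
  proof -
    have "?A ** transpose (matrix_inv ?A) = transpose (matrix_inv ?A ** transpose ?A)"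
      by (simp add: matrix_transpose_mul)
    also have "\<dots> = mat 1" using G12[OF y] tA by (simp add: transpose_mat)
    finally show ?thesis .
  qed
  then have "matrix_inv ?A = transpose (matrix_inv ?A)" by (rule inv_unique)
  then have "matrix_inv ?A $ a $ c = transpose (matrix_inv ?A) $ a $ c" by simp
  then show ?thesis unfolding fund_ginv_def by (simp add: transpose_def)
qed

lemma gy: "y \<noteq> 0 \<Longrightarrow> (\<Sum>j\<in>UNIV. fund_g L k j y * y $ j) = L y * pd k L y"
proof -
  assume y: "y \<noteq> 0"
  have "(\<Sum>j\<in>UNIV. fund_g L k j y * y $ j) = pd k L y * (\<Sum>j\<in>UNIV. y $ j * pd j L y) + L y * (\<Sum>j\<in>UNIV. y $ j * pd k (pd j L) y)"
    by (simp add: g_eq[OF y] sum_distrib_left sum.distrib algebra_simps)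
  then show ?thesis using F1[OF fL y] F2'[OF fL y] by simp
qed

lemma Gl: 
  assumes y: "y \<noteq> 0"
  shows "(\<Sum>k\<in>UNIV. fund_ginv L a k y * pd k L y) = y $ a / L y"
proof -
  have Lp: "L y > 0" using Lpos[OF fL y] .
  have "(\<Sum>k\<in>UNIV. fund_ginv L a k y * pd k L y) * L y = (\<Sum>k\<in>UNIV. fund_ginv L a k y * (L y * pd k L y))"
    by (simp add: sum_distrib_right sum_distrib_left algebra_simps)
  also have "\<dots> = (\<Sum>k\<in>UNIV. fund_ginv L a k y * (\<Sum>j\<in>UNIV. fund_g L k j y * y $ j))"
    using gy[OF y] by simp
  also have "\<dots> = y $ a"
    unfolding swap_mul by (simp add: G2[OF y] delta_sum delta_sum')
  finally show ?thesis using Lp by (simp add: eq_divide_eq)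

qed

end



lemma sum9: "(\<Sum>j\<in>UNIV. (A1 * u1 j + A2 * u2 j + A3 * u3 j) * (B1 * v1 j + B2 * v2 j + B3 * v3 j)) =
  A1*B1*(\<Sum>j\<in>UNIV. u1 j * v1 j) + A1*B2*(\<Sum>j\<in>UNIV. u1 j * v2 j) + A1*B3*(\<Sum>j\<in>UNIV. u1 j * v3 j) +
  A2*B1*(\<Sum>j\<in>UNIV. u2 j * v1 j) + A2*B2*(\<Sum>j\<in>UNIV. u2 j * v2 j) + A2*B3*(\<Sum>j\<in>UNIV. u2 j * v3 j) +
  A3*B1*(\<Sum>j\<in>UNIV. u3 j * v1 j) + A3*B2*(\<Sum>j\<in>UNIV. u3 j * v2 j) + A3*B3*(\<Sum>j\<in>UNIV. u3 j * (v3 j::real))"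
  by (simp add: sum_distrib_left sum.distrib algebra_simps)

definition bhat :: "(real^'n::finite \<Rightarrow> real) \<Rightarrow> real^'n \<Rightarrow> real^'n \<Rightarrow> 'n \<Rightarrow> real" where
  "bhat L b y j = (\<Sum>k\<in>UNIV. fund_ginv L j k y * b $ k)"

definition Gbar :: "(real^'n::finite \<Rightarrow> real) \<Rightarrow> real \<Rightarrow> real^'n \<Rightarrow> real^'n \<Rightarrow> 'n \<Rightarrow> 'n \<Rightarrow> real" where
  "Gbar L \<phi> b y j c = (let L0 = L y; \<beta> = b \<bullet> y; Lb = \<phi> * L0 + \<beta>;
      b2 = (\<Sum>i\<in>UNIV. b $ i * bhat L b y i) in
     L0 / (\<phi> * Lb) * fund_ginv L j c y + (\<phi> * \<beta> + L0 * b2) / (\<phi> * Lb^3) * (y $ j * y $ c)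
     - L0 / (\<phi> * Lb^2) * (y $ j * bhat L b y c + bhat L b y j * y $ c))"

context
  fixes L :: "real^'n::finite \<Rightarrow> real"
  assumes fL: "finsler L"
begin

lemma lG: "y \<noteq> 0 \<Longrightarrow> (\<Sum>j\<in>UNIV. pd j L y * fund_ginv L j c y) = y $ c / L y"
  using Gl[OF fL, of y c] G_sym[OF fL, of y] by (simp add: mult.commute)

lemma l_bh: 
  assumes y: "y \<noteq> 0"
  shows "(\<Sum>j\<in>UNIV. pd j L y * bhat L b y j) = (b \<bullet> y) / L y"
proof -
  have "(\<Sum>j\<in>UNIV. pd j L y * bhat L b y j) = (\<Sum>k\<in>UNIV. (\<Sum>j\<in>UNIV. pd j L y * fund_ginv L j k y) * b $ k)"
    unfolding bhat_def by (rule swap_mul)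
  also have "\<dots> = (\<Sum>k\<in>UNIV. y $ k * b $ k) / L y"
    by (simp add: lG[OF y] sum_divide_distrib)
  finally show ?thesis by (simp add: inner_vec_def mult.commute)
qed

lemma b_G: "y \<noteq> 0 \<Longrightarrow> (\<Sum>j\<in>UNIV. b $ j * fund_ginv L j c y) = bhat L b y c"
  unfolding bhat_def using G_sym[OF fL, of y] by (simp add: mult.commute)

lemma g_bh:
  assumes y: "y \<noteq> 0"
  shows "(\<Sum>j\<in>UNIV. fund_g L a j y * bhat L b y j) = b $ a"
  unfolding bhat_def swap_mul by (simp add: G1[OF fL y] delta_sum)

lemma inv_bar:
  assumes y: "y \<noteq> 0" and ph: "\<phi> > 0" and Lbp: "\<phi> * L y + b \<bullet> y > 0"
  shows "matrix_inv ((\<chi> a c. (\<phi> * pd a L y + b$a) * (\<phi> * pd c L y + b$c)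
           + (\<phi> * L y + b \<bullet> y) * (\<phi> * pd a (pd c L) y)) :: real^'n^'n)
       = (\<chi> j c. Gbar L \<phi> b y j c)"
proof (rule inv_unique)
  define L0 where "L0 = L y"
  define \<beta> where "\<beta> = b \<bullet> y"
  define Lb where "Lb = \<phi> * L0 + \<beta>"
  define b2 where "b2 = (\<Sum>i\<in>UNIV. b $ i * bhat L b y i)"
  define \<tau> where "\<tau> = \<phi> * Lb / L0"
  have L0p: "L0 > 0" using Lpos[OF fL y] unfolding L0_def .
  have Lbp': "Lb > 0" using Lbp unfolding Lb_def L0_def \<beta>_def .
  show "(\<chi> a c. (\<phi> * pd a L y + b$a) * (\<phi> * pd c L y + b$c)
           + (\<phi> * L y + b \<bullet> y) * (\<phi> * pd a (pd c L) y)) ** (\<chi> j c. Gbar L \<phi> b y j c) = mat 1"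
  proof (simp only: vec_eq_iff, intro allI)
    fix a c
    let ?A1 = "\<phi> * (\<phi> * pd a L y + b$a) - \<tau> * pd a L y"
    let ?A2 = "\<phi> * pd a L y + b$a"
    let ?B1 = "L0 / (\<phi> * Lb)"
    let ?B2 = "(\<phi> * \<beta> + L0 * b2) / (\<phi> * Lb^3) * y $ c - L0 / (\<phi> * Lb^2) * bhat L b y c"
    let ?B3 = "- L0 / (\<phi> * Lb^2) * y $ c"
    have Ma: "(\<phi> * pd a L y + b$a) * (\<phi> * pd j L y + b$j) + (\<phi> * L y + b \<bullet> y) * (\<phi> * pd a (pd j L) y)
       = ?A1 * pd j L y + ?A2 * b $ j + \<tau> * fund_g L a j y" for j
      using L0p unfolding g_eq[OF fL y] \<tau>_def Lb_def L0_def \<beta>_def by (simp add: field_simps)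
    have Gc: "Gbar L \<phi> b y j c = ?B1 * fund_ginv L j c y + ?B2 * y $ j + ?B3 * bhat L b y j" for j
      unfolding Gbar_def Let_def L0_def Lb_def \<beta>_def b2_def by (simp add: algebra_simps)
    have "((\<chi> a c. (\<phi> * pd a L y + b$a) * (\<phi> * pd c L y + b$c)
           + (\<phi> * L y + b \<bullet> y) * (\<phi> * pd a (pd c L) y)) ** (\<chi> j c. Gbar L \<phi> b y j c)) $ a $ c
       = (\<Sum>j\<in>UNIV. (?A1 * pd j L y + ?A2 * b $ j + \<tau> * fund_g L a j y) *
            (?B1 * fund_ginv L j c y + ?B2 * y $ j + ?B3 * bhat L b y j))"
      by (simp add: mat_entry Ma Gc)
    also have "\<dots> = ?A1 * ?B1 * (y $ c / L0) + ?A1 * ?B2 * L0 + ?A1 * ?B3 * (\<beta> / L0)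
        + ?A2 * ?B1 * bhat L b y c + ?A2 * ?B2 * \<beta> + ?A2 * ?B3 * b2
        + \<tau> * ?B1 * (if a = c then 1 else 0) + \<tau> * ?B2 * (L0 * pd a L y) + \<tau> * ?B3 * b $ a"
      unfolding sum9 using lG[OF y, of c] F1[OF fL y] l_bh[OF y, of b] b_G[OF y, of b c]
        G1[OF fL y, of a c] gy[OF fL y, of a] g_bh[OF y, of a b]
      by (simp add: L0_def \<beta>_def b2_def inner_vec_def mult.commute)
    also have "\<dots> = (if a = c then 1 else 0)"
    proof -
      have be: "\<beta> = Lb - \<phi> * L0" unfolding Lb_def by simp
      have ne: "L0 \<noteq> 0" "Lb \<noteq> 0" "\<phi> \<noteq> 0" using L0p Lbp' ph by auto
      show ?thesis unfolding \<tau>_def be using ne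
        by (simp add: field_simps power3_eq_cube power2_eq_square)
    qed
    finally show "((\<chi> a c. (\<phi> * pd a L y + b$a) * (\<phi> * pd c L y + b$c)
           + (\<phi> * L y + b \<bullet> y) * (\<phi> * pd a (pd c L) y)) ** (\<chi> j c. Gbar L \<phi> b y j c)) $ a $ c = mat 1 $ a $ c"
      by (simp add: mat1_entry)
  qed
qed

end



lemma kill_lemma:
  fixes X :: "'n::finite \<Rightarrow> 'n \<Rightarrow> real"
  assumes k1: "\<And>j. (\<Sum>k\<in>UNIV. X j k * y $ k) = 0"
    and k2: "\<And>k. (\<Sum>j\<in>UNIV. y $ j * X j k) = 0"
  shows "(\<Sum>j\<in>UNIV. \<Sum>k\<in>UNIV. (\<kappa> * G j k + P * (y $ j * y $ k) - Q * (y $ j * bh k + bh j * y $ k)) * X j k)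
     = \<kappa> * (\<Sum>j\<in>UNIV. \<Sum>k\<in>UNIV. G j k * X j k)"
proof -
  have "(\<Sum>k\<in>UNIV. (\<kappa> * G j k + P * (y $ j * y $ k) - Q * (y $ j * bh k + bh j * y $ k)) * X j k)
     = \<kappa> * (\<Sum>k\<in>UNIV. G j k * X j k) + (P * y $ j - Q * bh j) * (\<Sum>k\<in>UNIV. X j k * y $ k)
       - Q * (y $ j * (\<Sum>k\<in>UNIV. bh k * X j k))" for j
    by (simp add: sum_distrib_left sum.distrib sum_subtractf algebra_simps)
  then have "(\<Sum>j\<in>UNIV. \<Sum>k\<in>UNIV. (\<kappa> * G j k + P * (y $ j * y $ k) - Q * (y $ j * bh k + bh j * y $ k)) * X j k)
     = (\<Sum>j\<in>UNIV. \<kappa> * (\<Sum>k\<in>UNIV. G j k * X j k) - Q * (y $ j * (\<Sum>k\<in>UNIV. bh k * X j k)))"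
    using k1 by simp
  also have "\<dots> = \<kappa> * (\<Sum>j\<in>UNIV. \<Sum>k\<in>UNIV. G j k * X j k) - Q * (\<Sum>j\<in>UNIV. y $ j * (\<Sum>k\<in>UNIV. bh k * X j k))"
    by (simp add: sum_subtractf sum_distrib_left)
  also have "(\<Sum>j\<in>UNIV. y $ j * (\<Sum>k\<in>UNIV. bh k * X j k)) = (\<Sum>k\<in>UNIV. bh k * (\<Sum>j\<in>UNIV. y $ j * X j k))"
  proof -
    have "(\<Sum>j\<in>UNIV. y $ j * (\<Sum>k\<in>UNIV. bh k * X j k)) = (\<Sum>j\<in>UNIV. \<Sum>k\<in>UNIV. bh k * (y $ j * X j k))"
      by (simp add: sum_distrib_left algebra_simps)
    also have "\<dots> = (\<Sum>k\<in>UNIV. \<Sum>j\<in>UNIV. bh k * (y $ j * X j k))" by (rule sum.swap)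
    also have "\<dots> = (\<Sum>k\<in>UNIV. bh k * (\<Sum>j\<in>UNIV. y $ j * X j k))" by (simp add: sum_distrib_left)
    finally show ?thesis .
  qed
  finally show ?thesis using k2 by simp
qed

lemma swap2: "(\<Sum>j\<in>UNIV. \<Sum>k\<in>UNIV. (f j k :: real)) = (\<Sum>k\<in>UNIV. \<Sum>j\<in>UNIV. f j k)"
  by (rule sum.swap)

context
  fixes L :: "real^'n::finite \<Rightarrow> real"
  assumes fL: "finsler L"
begin

lemma LH: "y \<noteq> 0 \<Longrightarrow> L y * pd a (pd c L) y = fund_g L a c y - pd a L y * pd c L y"
  using g_eq[OF fL] by simp

lemma W:
  assumes y: "y \<noteq> 0"
  shows "(\<Sum>k\<in>UNIV. pd i (pd k L) y * (\<Sum>j\<in>UNIV. fund_ginv L k j y * (b $ j - (b \<bullet> y) / L y * pd j L y)))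
    = (b $ i - (b \<bullet> y) / L y * pd i L y) / L y"
proof -
  define m where "m j = b $ j - (b \<bullet> y) / L y * pd j L y" for j
  have L0: "L y > 0" using Lpos[OF fL y] .
  have s1: "(\<Sum>k\<in>UNIV. fund_g L i k y * (\<Sum>j\<in>UNIV. fund_ginv L k j y * m j)) = m i"
    unfolding swap_mul by (simp add: G1[OF fL y] delta_sum)
  have s2: "(\<Sum>k\<in>UNIV. pd k L y * (\<Sum>j\<in>UNIV. fund_ginv L k j y * m j)) = 0"
  proof -
    have "(\<Sum>k\<in>UNIV. pd k L y * (\<Sum>j\<in>UNIV. fund_ginv L k j y * m j)) = (\<Sum>j\<in>UNIV. (y $ j / L y) * m j)"
      unfolding swap_mul by (simp add: lG[OF fL y])
    also have "\<dots> = (1 / L y) * (\<Sum>j\<in>UNIV. y $ j * b $ j) - ((b \<bullet> y) / (L y * L y)) * (\<Sum>j\<in>UNIV. y $ j * pd j L y)"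
    proof -
      have pw: "(y $ j / L y) * m j = (1 / L y) * (y $ j * b $ j) - ((b \<bullet> y) / (L y * L y)) * (y $ j * pd j L y)" for j
        unfolding m_def using L0 by (simp add: field_simps)
      show ?thesis by (simp only: pw sum_subtractf sum_distrib_left[symmetric])
    qed
    also have "\<dots> = 0" using F1[OF fL y] L0 by (simp add: inner_vec_def mult.commute)
    finally show ?thesis .
  qed
  define w where "w k = (\<Sum>j\<in>UNIV. fund_ginv L k j y * m j)" for k
  have pw: "fund_g L i k y * w k - pd i L y * (pd k L y * w k) = L y * (pd i (pd k L) y * w k)" for k
    unfolding g_eq[OF fL y] by (simp add: algebra_simps)
  have "L y * (\<Sum>k\<in>UNIV. pd i (pd k L) y * w k)
     = (\<Sum>k\<in>UNIV. fund_g L i k y * w k) - pd i L y * (\<Sum>k\<in>UNIV. pd k L y * w k)"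
    by (simp only: sum_distrib_left sum_subtractf[symmetric] pw)
  also have "\<dots> = m i" using s1 s2 unfolding w_def by simp
  finally show ?thesis using L0 unfolding w_def m_def by (simp add: field_simps)
qed

lemma Tr:
  assumes y: "y \<noteq> 0"
  shows "(\<Sum>j\<in>UNIV. \<Sum>k\<in>UNIV. fund_ginv L j k y * pd k (pd j L) y) = (real CARD('n) - 1) / L y"
proof -
  have L0: "L y > 0" using Lpos[OF fL y] .
  have pw: "fund_ginv L j k y * fund_g L k j y - fund_ginv L j k y * pd k L y * pd j L y
      = L y * (fund_ginv L j k y * pd k (pd j L) y)" for j k
    unfolding g_eq[OF fL y] by (simp add: algebra_simps)
  have "L y * (\<Sum>j\<in>UNIV. \<Sum>k\<in>UNIV. fund_ginv L j k y * pd k (pd j L) y)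
     = (\<Sum>j\<in>UNIV. \<Sum>k\<in>UNIV. fund_ginv L j k y * fund_g L k j y - fund_ginv L j k y * pd k L y * pd j L y)"
    by (simp only: pw sum_distrib_left)
  also have "\<dots> = (\<Sum>j\<in>UNIV. (\<Sum>k\<in>UNIV. fund_ginv L j k y * fund_g L k j y) - (\<Sum>k\<in>UNIV. fund_ginv L j k y * pd k L y) * pd j L y)"
    by (simp only: sum_subtractf sum_distrib_right)
  also have "\<dots> = (\<Sum>j\<in>UNIV. 1 - y $ j * pd j L y / L y)"
    by (simp add: G2[OF fL y] Gl[OF fL y])
  also have "\<dots> = real CARD('n) - 1"
    using F1[OF fL y] L0 by (simp add: sum_subtractf sum_divide_distrib[symmetric])
  finally show ?thesis using L0 by (simp add: field_simps)
qed

end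



definition CB :: "(real^'n::finite \<Rightarrow> real) \<Rightarrow> real \<Rightarrow> real^'n \<Rightarrow> real^'n \<Rightarrow> 'n \<Rightarrow> 'n \<Rightarrow> 'n \<Rightarrow> real" where
  "CB L \<phi> b y i j k = 1/2 * (\<phi> * pd k (pd i L) y * (\<phi> * pd j L y + b$j)
     + (\<phi> * pd i L y + b$i) * (\<phi> * pd k (pd j L) y)
     + (\<phi> * pd k L y + b$k) * (\<phi> * pd i (pd j L) y)
     + (\<phi> * L y + b \<bullet> y) * (\<phi> * pd k (pd i (pd j L)) y))"

context
  fixes L :: "real^'n::finite \<Rightarrow> real"
  assumes fL: "finsler L"
begin

lemma ylb: "y \<noteq> 0 \<Longrightarrow> (\<Sum>k\<in>UNIV. y $ k * (\<phi> * pd k L y + b $ k)) = \<phi> * L y + b \<bullet> y"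
proof -
  assume y: "y \<noteq> 0"
  have "(\<Sum>k\<in>UNIV. y $ k * (\<phi> * pd k L y + b $ k)) = \<phi> * (\<Sum>k\<in>UNIV. y $ k * pd k L y) + (\<Sum>k\<in>UNIV. y $ k * b $ k)"
    by (simp add: sum.distrib sum_distrib_left algebra_simps)
  then show ?thesis using F1[OF fL y] by (simp add: inner_vec_def mult.commute)
qed

lemma K1:
  assumes y: "y \<noteq> 0"
  shows "(\<Sum>k\<in>UNIV. CB L \<phi> b y i j k * y $ k) = 0"
proof -
  have "(\<Sum>k\<in>UNIV. CB L \<phi> b y i j k * y $ k) = 1/2 * (\<phi> * (\<phi> * pd j L y + b$j) * (\<Sum>k\<in>UNIV. y $ k * pd k (pd i L) y)
     + (\<phi> * pd i L y + b$i) * \<phi> * (\<Sum>k\<in>UNIV. y $ k * pd k (pd j L) y)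
     + \<phi> * pd i (pd j L) y * (\<Sum>k\<in>UNIV. y $ k * (\<phi> * pd k L y + b $ k))
     + (\<phi> * L y + b \<bullet> y) * \<phi> * (\<Sum>k\<in>UNIV. y $ k * pd k (pd i (pd j L)) y))"
    unfolding CB_def by (simp add: sum_distrib_left sum_distrib_right sum.distrib algebra_simps)
  also have "\<dots> = 0" using F2[OF fL y] F3[OF fL y] ylb[OF y] by simp
  finally show ?thesis .
qed

lemma K2:
  assumes y: "y \<noteq> 0"
  shows "(\<Sum>j\<in>UNIV. y $ j * CB L \<phi> b y i j k) = 0"
proof -
  have "(\<Sum>j\<in>UNIV. y $ j * CB L \<phi> b y i j k) = 1/2 * (\<phi> * pd k (pd i L) y * (\<Sum>j\<in>UNIV. y $ j * (\<phi> * pd j L y + b $ j))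
     + (\<phi> * pd i L y + b$i) * \<phi> * (\<Sum>j\<in>UNIV. y $ j * pd k (pd j L) y)
     + (\<phi> * pd k L y + b$k) * \<phi> * (\<Sum>j\<in>UNIV. y $ j * pd i (pd j L) y)
     + (\<phi> * L y + b \<bullet> y) * \<phi> * (\<Sum>j\<in>UNIV. y $ j * pd k (pd i (pd j L)) y))"
    unfolding CB_def by (simp add: sum_distrib_left sum_distrib_right sum.distrib algebra_simps)
  also have "\<dots> = 0" using F2'[OF fL y] F5[OF fL y] ylb[OF y] F4[OF fL y, of k i] by simp
  finally show ?thesis .
qed

lemma ctr_bar:
  assumes y: "y \<noteq> 0"
  shows "(\<Sum>j\<in>UNIV. \<Sum>k\<in>UNIV. fund_ginv L j k y * CB L \<phi> b y i j k)
    = (\<phi> * (\<phi> * L y + b \<bullet> y) / L y) * cartan_tr L i y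
      + \<phi> / 2 * (real CARD('n) + 1) * (b$i - (b \<bullet> y) / L y * pd i L y) / L y"
proof -
  define m where "m j = b $ j - (b \<bullet> y) / L y * pd j L y" for j
  define \<tau> where "\<tau> = \<phi> * (\<phi> * L y + b \<bullet> y) / L y"
  have L0: "L y > 0" using Lpos[OF fL y] .
  let ?G = "\<lambda>j k. fund_ginv L j k y"
  have pw: "?G j k * CB L \<phi> b y i j k = \<tau> * (?G j k * cartan L i j k y)
     + \<phi> / 2 * (?G j k * (pd k (pd i L) y * m j)) + (\<phi> / 2 * m i) * (?G j k * pd k (pd j L) y)
     + \<phi> / 2 * (?G j k * (m k * pd i (pd j L) y))" for j k
    unfolding CB_def cartan_formula[OF sL[OF fL] y] \<tau>_def m_def using L0
    by (simp add: field_simps)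
  have "(\<Sum>j\<in>UNIV. \<Sum>k\<in>UNIV. ?G j k * CB L \<phi> b y i j k)
     = \<tau> * (\<Sum>j\<in>UNIV. \<Sum>k\<in>UNIV. ?G j k * cartan L i j k y)
     + \<phi> / 2 * (\<Sum>j\<in>UNIV. \<Sum>k\<in>UNIV. ?G j k * (pd k (pd i L) y * m j))
     + (\<phi> / 2 * m i) * (\<Sum>j\<in>UNIV. \<Sum>k\<in>UNIV. ?G j k * pd k (pd j L) y)
     + \<phi> / 2 * (\<Sum>j\<in>UNIV. \<Sum>k\<in>UNIV. ?G j k * (m k * pd i (pd j L) y))"
    by (simp only: pw sum.distrib sum_distrib_left[symmetric])
  also have "(\<Sum>j\<in>UNIV. \<Sum>k\<in>UNIV. ?G j k * (pd k (pd i L) y * m j)) = m i / L y"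
  proof -
    have "(\<Sum>j\<in>UNIV. \<Sum>k\<in>UNIV. ?G j k * (pd k (pd i L) y * m j)) = (\<Sum>k\<in>UNIV. \<Sum>j\<in>UNIV. ?G j k * (pd k (pd i L) y * m j))"
      by (rule sum.swap)
    also have "\<dots> = (\<Sum>k\<in>UNIV. pd i (pd k L) y * (\<Sum>j\<in>UNIV. ?G k j * m j))"
      using G_sym[OF fL y] F4[OF fL y] by (simp add: sum_distrib_left algebra_simps)
    also have "\<dots> = m i / L y" using W[OF fL y, of i b] unfolding m_def .
    finally show ?thesis .
  qed
  also have "(\<Sum>j\<in>UNIV. \<Sum>k\<in>UNIV. ?G j k * (m k * pd i (pd j L) y)) = m i / L y"
  proof -
    have "(\<Sum>j\<in>UNIV. \<Sum>k\<in>UNIV. ?G j k * (m k * pd i (pd j L) y)) = (\<Sum>j\<in>UNIV. pd i (pd j L) y * (\<Sum>k\<in>UNIV. ?G j k * m k))"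
      by (simp add: sum_distrib_left algebra_simps)
    also have "\<dots> = m i / L y" using W[OF fL y, of i b] unfolding m_def .
    finally show ?thesis .
  qed
  also have "(\<Sum>j\<in>UNIV. \<Sum>k\<in>UNIV. ?G j k * pd k (pd j L) y) = (real CARD('n) - 1) / L y"
    by (rule Tr[OF fL y])
  finally have X: "(\<Sum>j\<in>UNIV. \<Sum>k\<in>UNIV. ?G j k * CB L \<phi> b y i j k) = \<tau> * (\<Sum>j\<in>UNIV. \<Sum>k\<in>UNIV. ?G j k * cartan L i j k y) +
    \<phi> / 2 * (m i / L y) + \<phi> / 2 * m i * ((real CARD('n) - 1) / L y) + \<phi> / 2 * (m i / L y)" .
  show ?thesis unfolding X cartan_tr_def \<tau>_def m_def using L0
    by (simp add: field_simps)
qed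

end



theorem proposition1:
  fixes L :: "real^'n::finite \<Rightarrow> real" and \<sigma> :: real and b :: "real^'n"
  assumes "CARD('n) \<ge> 3"
    and "finsler L"
    and "finsler (\<lambda>y. exp \<sigma> * L y + b \<bullet> y)"
  shows "\<forall>y i j k. y \<noteq> 0 \<longrightarrow>
    K_tensor (\<lambda>y. exp \<sigma> * L y + b \<bullet> y) i j k y = exp \<sigma> * K_tensor L i j k y"
proof (intro allI impI)
  fix y :: "real^'n" and i j k :: 'n
  assume y: "y \<noteq> 0"
  define \<phi> where "\<phi> = exp \<sigma>"
  define Lb where "Lb = (\<lambda>y. \<phi> * L y + b \<bullet> y)"
  have fL: "finsler L" by fact
  have fLb: "finsler Lb" using assms(3) unfolding Lb_def \<phi>_def .
  have ph: "\<phi> > 0" unfolding \<phi>_def by simp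
  have sL': "smooth_off0 L" by (rule sL[OF fL])
  have sLb: "smooth_off0 Lb" by (rule sL[OF fLb])
  have L0: "L y > 0" by (rule Lpos[OF fL y])
  have Lb0: "Lb y > 0" by (rule Lpos[OF fLb y])
  have P1: "pd a Lb z = \<phi> * pd a L z + b $ a" if "z \<noteq> 0" for a z
    unfolding Lb_def by (rule pd_randers[OF smooth0_L[OF sL'] that])
  have P2: "pd c (pd a Lb) z = \<phi> * pd c (pd a L) z" if "z \<noteq> 0" for a c z
  proof -
    have "pd c (pd a Lb) z = pd c (\<lambda>w. \<phi> * pd a L w + b $ a) z"
      by (rule pd_local[OF that]) (use P1 in auto)
    also have "\<dots> = \<phi> * pd c (pd a L) z" by (rule pd_affine[OF smooth0_pd[OF sL'] that])
    finally show ?thesis .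
  qed
  have P3: "pd e (pd c (pd a Lb)) y = \<phi> * pd e (pd c (pd a L)) y" for a c e
  proof -
    have "pd e (pd c (pd a Lb)) y = pd e (\<lambda>w. \<phi> * pd c (pd a L) w + 0) y"
      by (rule pd_local[OF y]) (use P2 in auto)
    also have "\<dots> = \<phi> * pd e (pd c (pd a L)) y" by (rule pd_affine[OF smooth0_pd2[OF sL'] y])
    finally show ?thesis .
  qed
  have gb: "fund_g Lb a c y = (\<phi> * pd a L y + b$a) * (\<phi> * pd c L y + b$c)
           + (\<phi> * L y + b \<bullet> y) * (\<phi> * pd a (pd c L) y)" for a c
    using fund_g_formula[OF sLb y, of a c] P1[OF y] P2[OF y] unfolding Lb_def by simp
  have Lbpos: "\<phi> * L y + b \<bullet> y > 0" using Lb0 unfolding Lb_def .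
  have lbeq: "\<phi> * L y + b \<bullet> y = Lb y" unfolding Lb_def ..
  have Gb: "fund_ginv Lb a c y = Gbar L \<phi> b y a c" for a c
  proof -
    have "(\<chi> a c. fund_g Lb a c y) = ((\<chi> a c. (\<phi> * pd a L y + b$a) * (\<phi> * pd c L y + b$c)
           + (\<phi> * L y + b \<bullet> y) * (\<phi> * pd a (pd c L) y)) :: real^'n^'n)"
      by (simp add: gb)
    then show ?thesis unfolding fund_ginv_def using inv_bar[OF fL y ph Lbpos] by simp
  qed
  have cb: "cartan Lb a c e y = CB L \<phi> b y a c e" for a c e
    unfolding cartan_formula[OF sLb y] CB_def P1[OF y] P2[OF y] P3 unfolding Lb_def by simp
  have trb: "cartan_tr Lb a y = cartan_tr L a y + (real CARD('n) + 1) * (b$a - (b \<bullet> y) / L y * pd a L y) / (2 * Lb y)" for a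
  proof -
    have "cartan_tr Lb a y = (\<Sum>c\<in>UNIV. \<Sum>e\<in>UNIV. Gbar L \<phi> b y c e * CB L \<phi> b y a c e)"
      unfolding cartan_tr_def Gb cb ..
    also have "\<dots> = (L y / (\<phi> * Lb y)) * (\<Sum>c\<in>UNIV. \<Sum>e\<in>UNIV. fund_ginv L c e y * CB L \<phi> b y a c e)"
      unfolding Gbar_def Let_def Lb_def
      by (rule kill_lemma[OF K1[OF fL y] K2[OF fL y]])
    also have "\<dots> = cartan_tr L a y + (real CARD('n) + 1) * (b$a - (b \<bullet> y) / L y * pd a L y) / (2 * Lb y)"
      unfolding ctr_bar[OF fL y] lbeq using L0 Lb0 ph by (simp add: field_simps)
    finally show ?thesis .
  qed
  have hb: "h_ang Lb a c y = Lb y * \<phi> * pd a (pd c L) y" for a c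
    unfolding h_ang_def l_vec_def gb P1[OF y] lbeq by (simp add: algebra_simps)
  have h: "h_ang L a c y = L y * pd a (pd c L) y" for a c
    unfolding h_ang_def l_vec_def g_eq[OF fL y] by simp
  have cL: "cartan L a c e y = 1/2 * (pd e (pd a L) y * pd c L y + pd a L y * pd e (pd c L) y
      + pd e L y * pd a (pd c L) y + L y * pd e (pd a (pd c L)) y)" for a c e
    by (rule cartan_formula[OF sL' y])
  have "K_tensor Lb i j k y = \<phi> * K_tensor L i j k y"
  proof -
    have beq: "b \<bullet> y = Lb y - \<phi> * L y" unfolding Lb_def by simp
    define N1 where "N1 = real CARD('n) + 1"
    have N: "N1 \<noteq> 0" unfolding N1_def by (simp add: add_pos_pos)
    show ?thesis
      unfolding K_tensor_def M_vec_def trb hb h cb CB_def cL lbeq beq N1_def[symmetric]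
      using L0 Lb0 ph N by (simp add: field_simps)
  qed
  then show "K_tensor (\<lambda>y. exp \<sigma> * L y + b \<bullet> y) i j k y = exp \<sigma> * K_tensor L i j k y"
    unfolding Lb_def \<phi>_def .
qed


end
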